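(* Let $\alpha_2\in\mathbb{C}$ and let $u(t)$ satisfy the fifth-order equation $$\frac{d^5u}{dt^5}=\frac{N}{48\left(\frac{du}{dt}\right)^2+8\frac{d^3u}{dt^3}-2t},$$ where $$N=(1-\alpha_2)\alpha_2-2u'\left(24u'^2-t\right)^2-24u''\left(u'-tu''\right)+8u'''\left(5u'\left(t-24u'^2\right)-12u''^2-16u'u'''\right)+2u''''\left(48u'u''+2u''''-1\right)$$ (primes denote $d/dt$). Define $$x=u,\quad y=u',\quad z=u'',\quad w=u'''-\frac14\left(t-24u'^2\right),\quad q=\frac{u''''-\frac{\alpha_2-24u'u''}{2}}{u'''-\frac14\left(t-24u'^2\right)} .$$ Then this birational change of variables takes the equation (written as a first-order system in $u,u',u'',u''',u''''$) into the polynomial system $$\frac{dx}{dt}=y,\quad \frac{dy}{dt}=z,\quad \frac{dz}{dt}=-6y^2+w+\frac t4,\quad \frac{dw}{dt}=wq+\frac{2\alpha_2-1}{4},\quad \frac{dq}{dt}=-\frac12q^2-4y .$$ *)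

theory Defs
  imports "HOL-Analysis.Analysis"
begin

end

theory Submission
  imports Defs "HOL-Complex_Analysis.Complex_Analysis"
begin

lemma hd:
  assumes "u holomorphic_on S" "open S" "t \<in> S"
  shows "((deriv ^^ n) u has_field_derivative (deriv ^^ Suc n) u t) (at t)"
proof -
  have "(deriv ^^ n) u holomorphic_on S" using holomorphic_higher_deriv assms by blast
  from holomorphic_derivI[OF this assms(2,3)] show ?thesis by simp
qed

theorem theorem9p1:
  fixes u :: "complex \<Rightarrow> complex" and \<alpha>2 :: complex and S :: "complex set"
    and x y z w q :: "complex \<Rightarrow> complex"
  assumes S_open: "open S"
    and u_holo: "u holomorphic_on S"
    and den_nz: "\<forall>t\<in>S. 48 * (deriv u t)^2 + 8 * (deriv ^^ 3) u t - 2 * t \<noteq> 0"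
    and ode: "\<forall>t\<in>S. (deriv ^^ 5) u t =
       ((1 - \<alpha>2) * \<alpha>2
        - 2 * deriv u t * (24 * (deriv u t)^2 - t)^2
        - 24 * (deriv ^^ 2) u t * (deriv u t - t * (deriv ^^ 2) u t)
        + 8 * (deriv ^^ 3) u t * (5 * deriv u t * (t - 24 * (deriv u t)^2)
              - 12 * ((deriv ^^ 2) u t)^2 - 16 * deriv u t * (deriv ^^ 3) u t)
        + 2 * (deriv ^^ 4) u t * (48 * deriv u t * (deriv ^^ 2) u t + 2 * (deriv ^^ 4) u t - 1))
       / (48 * (deriv u t)^2 + 8 * (deriv ^^ 3) u t - 2 * t)"
    and w_nz: "\<forall>t\<in>S. (deriv ^^ 3) u t - (t - 24 * (deriv u t)^2) / 4 \<noteq> 0"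
    and x_def: "x \<equiv> u"
    and y_def: "y \<equiv> deriv u"
    and z_def: "z \<equiv> (deriv ^^ 2) u"
    and w_def: "w \<equiv> (\<lambda>t. (deriv ^^ 3) u t - (t - 24 * (deriv u t)^2) / 4)"
    and q_def: "q \<equiv> (\<lambda>t. ((deriv ^^ 4) u t - (\<alpha>2 - 24 * deriv u t * (deriv ^^ 2) u t) / 2)
                       / ((deriv ^^ 3) u t - (t - 24 * (deriv u t)^2) / 4))"
  shows "\<forall>t\<in>S.
           (x has_field_derivative y t) (at t) \<and>
           (y has_field_derivative z t) (at t) \<and>
           (z has_field_derivative (- 6 * (y t)^2 + w t + t / 4)) (at t) \<and>
           (w has_field_derivative (w t * q t + (2 * \<alpha>2 - 1) / 4)) (at t) \<and>
           (q has_field_derivative (- (1/2) * (q t)^2 - 4 * y t)) (at t)"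
proof
  fix t assume t: "t \<in> S"
  note H = hd[OF u_holo S_open t]
  define u1 where "u1 = deriv u t"
  define u2 where "u2 = (deriv ^^ 2) u t"
  define u3 where "u3 = (deriv ^^ 3) u t"
  define u4 where "u4 = (deriv ^^ 4) u t"
  define u5 where "u5 = (deriv ^^ 5) u t"
  have d0: "(u has_field_derivative u1) (at t)" using H[of 0] by (simp add: u1_def)
  have d1: "(deriv u has_field_derivative u2) (at t)" using H[of 1] by (simp add: u2_def numeral_eq_Suc)
  have d2: "((deriv ^^ 2) u has_field_derivative u3) (at t)" using H[of 2] by (simp add: u3_def numeral_eq_Suc)
  have d3: "((deriv ^^ 3) u has_field_derivative u4) (at t)" using H[of 3] by (simp add: u4_def numeral_eq_Suc del: funpow.simps)
  have d4: "((deriv ^^ 4) u has_field_derivative u5) (at t)" using H[of 4] by (simp add: u5_def numeral_eq_Suc del: funpow.simps)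
  have wnz: "u3 - (t - 24 * u1^2) / 4 \<noteq> 0" using w_nz t by (simp add: u1_def u3_def)
  have dnz: "48 * u1^2 + 8 * u3 - 2 * t \<noteq> 0" using den_nz t by (simp add: u1_def u3_def)
  have o: "u5 * (48 * u1^2 + 8 * u3 - 2 * t) = (1 - \<alpha>2) * \<alpha>2
        - 2 * u1 * (24 * u1^2 - t)^2
        - 24 * u2 * (u1 - t * u2)
        + 8 * u3 * (5 * u1 * (t - 24 * u1^2) - 12 * u2^2 - 16 * u1 * u3)
        + 2 * u4 * (48 * u1 * u2 + 2 * u4 - 1)"
    using ode t dnz by (simp add: u1_def u2_def u3_def u4_def u5_def)
  have dw: "(w has_field_derivative (u4 - (1 - 24 * (2 * u1 * u2)) / 4)) (at t)"
    unfolding w_def by (auto intro!: derivative_eq_intros d1 d3 simp: u1_def)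
  have dq: "(q has_field_derivative
     (((u5 - (0 - 24 * (u2 * u2 + u1 * u3)) / 2) * (u3 - (t - 24 * u1^2) / 4)
      - (u4 - (\<alpha>2 - 24 * u1 * u2) / 2) * (u4 - (1 - 24 * (2 * u1 * u2)) / 4))
      / (u3 - (t - 24 * u1^2) / 4)^2)) (at t)"
    unfolding q_def using wnz
    by (auto intro!: derivative_eq_intros d0 d1 d2 d3 d4 simp: u1_def u2_def u3_def u4_def power2_eq_square) (simp add: field_simps)
  show "(x has_field_derivative y t) (at t) \<and>
           (y has_field_derivative z t) (at t) \<and>
           (z has_field_derivative (- 6 * (y t)^2 + w t + t / 4)) (at t) \<and>
           (w has_field_derivative (w t * q t + (2 * \<alpha>2 - 1) / 4)) (at t) \<and>
           (q has_field_derivative (- (1/2) * (q t)^2 - 4 * y t)) (at t)"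
  proof (intro conjI)
    show "(x has_field_derivative y t) (at t)" using d0 by (simp add: x_def y_def u1_def)
    show "(y has_field_derivative z t) (at t)" using d1 by (simp add: y_def z_def u2_def)
    show "(z has_field_derivative (- 6 * (y t)^2 + w t + t / 4)) (at t)"
    proof -
      have "- 6 * (y t)^2 + w t + t / 4 = u3" by (simp add: y_def w_def u1_def u3_def field_simps)
      thus ?thesis using d2 by (simp add: z_def)
    qed
    show "(w has_field_derivative (w t * q t + (2 * \<alpha>2 - 1) / 4)) (at t)"
    proof -
      have "w t * q t + (2 * \<alpha>2 - 1) / 4 = u4 - (1 - 24 * (2 * u1 * u2)) / 4"
      proof -
        have "w t * q t = u4 - (\<alpha>2 - 24 * u1 * u2) / 2"
          using wnz by (simp add: w_def q_def u1_def u2_def u3_def u4_def)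
        thus ?thesis by (simp add: field_simps) (drule arg_cong[where f="\<lambda>x. 8*x"], simp add: algebra_simps)
      qed
      thus ?thesis using dw by simp
    qed
    show "(q has_field_derivative (- (1/2) * (q t)^2 - 4 * y t)) (at t)"
    proof -
      define W where "W = u3 - (t - 24 * u1^2) / 4"
      define A where "A = u4 - (\<alpha>2 - 24 * u1 * u2) / 2"
      have WW: "W \<noteq> 0" using wnz by (simp add: W_def)
      have key: "u5 * (8 * W) = (1 - \<alpha>2) * \<alpha>2
        - 2 * u1 * (24 * u1^2 - t)^2
        - 24 * u2 * (u1 - t * u2)
        + 8 * u3 * (5 * u1 * (t - 24 * u1^2) - 12 * u2^2 - 16 * u1 * u3)
        + 2 * u4 * (48 * u1 * u2 + 2 * u4 - 1)"
      proof -
        have "8 * W = 48 * u1^2 + 8 * u3 - 2 * t" by (simp add: W_def field_simps)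
        thus ?thesis using o by simp
      qed
      have P: "(u5 - (0 - 24 * (u2 * u2 + u1 * u3)) / 2) * W
        - A * (u4 - (1 - 24 * (2 * u1 * u2)) / 4) = - (1/2) * A^2 - 4 * u1 * W^2"
        using key unfolding A_def W_def by algebra
      have qt: "q t = A / W" by (simp add: q_def A_def W_def u1_def u2_def u3_def u4_def)
      have "((u5 - (0 - 24 * (u2 * u2 + u1 * u3)) / 2) * (u3 - (t - 24 * u1^2) / 4)
      - (u4 - (\<alpha>2 - 24 * u1 * u2) / 2) * (u4 - (1 - 24 * (2 * u1 * u2)) / 4))
      / (u3 - (t - 24 * u1^2) / 4)^2 = - (1/2) * (q t)^2 - 4 * y t"
        unfolding W_def[symmetric] A_def[symmetric] qt P using WW
        by (simp add: y_def u1_def[symmetric] field_simps power2_eq_square)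
      with dq show ?thesis by simp
    qed
  qed
qed

end
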